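(* In an MFQST with degree bound $\phi=3$, every Steiner point has degree exactly $3$.
   Context: Let $Z=\{z_1,\dots,z_n\}\subset\mathbb{R}^2$ ($n\ge 1$) be a set of sources and $z_{BS}\in\mathbb{R}^2\setminus Z$ a sink; each source has supply $1$. A flow-dependent quadratic Steiner tree (FQST) consists of a finite set $S\subset\mathbb{R}^2$ of Steiner points and a tree $T$ with vertex set $Z\cup S\cup\{z_{BS}\}$ whose edges are directed towards $z_{BS}$. Every node other than the sink has exactly one out-edge, and the sink has none. Each edge $e$ carries a positive flow $f(e)$ such that: - at each source, the flow on its out-edge minus the total flow on its in-edges equals $1$; - at each Steiner point, the out-flow equals the total in-flow; - the sink receives total flow $n$. The cost is $L(T)=\sum_{e\in E(T)} f(e)|e|^2$. An MFQST with degree bound $\phi$ is an FQST minimising $L$ among all FQSTs (any finite $S$, any topology) in which every Steiner point has degree at least $\phi$. *)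

theory Defs
  imports "HOL-Analysis.Analysis"
begin

type_synonym pt = "real^2"

text \<open>Every non-sink vertex v has exactly one out-edge, namely (v, p v), carrying flow f v.\<close>

definition fqst :: "pt set \<Rightarrow> pt \<Rightarrow> pt set \<Rightarrow> (pt \<Rightarrow> pt) \<Rightarrow> (pt \<Rightarrow> real) \<Rightarrow> bool" where
  "fqst Z zBS S p f \<longleftrightarrow>
     finite S \<and> S \<inter> insert zBS Z = {} \<and>
     (\<forall>v\<in>Z \<union> S. p v \<in> Z \<union> S \<union> {zBS} \<and> f v > 0) \<and>
     (\<forall>v\<in>Z \<union> S \<union> {zBS}. \<exists>k. (p ^^ k) v = zBS) \<and>
     (\<forall>z\<in>Z. f z - (\<Sum>u\<in>{u\<in>Z \<union> S. p u = z}. f u) = 1) \<and>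
     (\<forall>s\<in>S. f s = (\<Sum>u\<in>{u\<in>Z \<union> S. p u = s}. f u)) \<and>
     (\<Sum>u\<in>{u\<in>Z \<union> S. p u = zBS}. f u) = real (card Z)"

definition fqst_cost :: "pt set \<Rightarrow> pt set \<Rightarrow> (pt \<Rightarrow> pt) \<Rightarrow> (pt \<Rightarrow> real) \<Rightarrow> real" where
  "fqst_cost Z S p f = (\<Sum>v\<in>Z \<union> S. f v * (dist v (p v))\<^sup>2)"

text \<open>Degree of a (non-sink) vertex: number of in-edges plus its one out-edge.\<close>
definition fqst_degree :: "pt set \<Rightarrow> pt set \<Rightarrow> (pt \<Rightarrow> pt) \<Rightarrow> pt \<Rightarrow> nat" where
  "fqst_degree Z S p s = card {u\<in>Z \<union> S. p u = s} + 1"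

definition mfqst :: "nat \<Rightarrow> pt set \<Rightarrow> pt \<Rightarrow> pt set \<Rightarrow> (pt \<Rightarrow> pt) \<Rightarrow> (pt \<Rightarrow> real) \<Rightarrow> bool" where
  "mfqst \<phi> Z zBS S p f \<longleftrightarrow>
     fqst Z zBS S p f \<and> (\<forall>s\<in>S. fqst_degree Z S p s \<ge> \<phi>) \<and>
     (\<forall>S' p' f'. fqst Z zBS S' p' f' \<and> (\<forall>s\<in>S'. fqst_degree Z S' p' s \<ge> \<phi>)
        \<longrightarrow> fqst_cost Z S p f \<le> fqst_cost Z S' p' f')"

end

theory Submission
  imports Defs
begin

lemma reach_lift:
  assumes pin: "\<forall>v\<in>Z\<union>S. p v \<in> Z\<union>S\<union>{zBS}" and k: "(p^^k) v = zBS" and v: "v \<in> Z\<union>S\<union>{zBS}"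
   and s': "s' \<notin> Z\<union>S\<union>{zBS}" and p1: "p u1 = s" and p2: "p u2 = s"
   and p': "p' = p(u1 := s', u2 := s', s' := s)"
  shows "\<exists>m. (p'^^m) v = zBS"
  using k v
proof (induction k arbitrary: v)
  case 0 then show ?case by (metis funpow_0)
next
  case (Suc k)
  show ?case
  proof (cases "v = zBS")
    case True then show ?thesis by (metis funpow_0)
  next
    case False
    then have vZS: "v \<in> Z\<union>S" using Suc.prems by auto
    have pv: "p v \<in> Z\<union>S\<union>{zBS}" using pin vZS by auto
    have "(p^^k) (p v) = zBS" using Suc.prems(1) by (simp add: funpow_Suc_right del: funpow.simps)
    then obtain m where m: "(p'^^m) (p v) = zBS" using Suc.IH pv by blast
    have vs': "v \<noteq> s'" using vZS s' by auto
    show ?thesis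
    proof (cases "v = u1 \<or> v = u2")
      case True
      then have a: "p' v = s'" using vs' p' by auto
      have b: "p' s' = s" using p' by simp
      have c: "p v = s" using True p1 p2 by auto
      have "(p'^^(Suc (Suc m))) v = (p'^^m) (p' (p' v))" by (simp only: funpow_Suc_right comp_def)
      then show ?thesis using a b c m by metis
    next
      case False
      then have a: "p' v = p v" using vs' p' by auto
      have "(p'^^(Suc m)) v = (p'^^m) (p' v)" by (simp only: funpow_Suc_right comp_def)
      then show ?thesis using a m by metis
    qed
  qed
qed

lemma split_step:
  fixes Z S :: "pt set" and p :: "pt \<Rightarrow> pt" and f :: "pt \<Rightarrow> real"
  assumes fq: "fqst Z zBS S p f" and finZ: "finite Z"
   and sS: "s \<in> S" and u1: "u1 \<in> Z \<union> S" and u2: "u2 \<in> Z \<union> S" and u12: "u1 \<noteq> u2"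
   and p1: "p u1 = s" and p2: "p u2 = s"
   and g0: "f u1 *\<^sub>R (u1 - s) + f u2 *\<^sub>R (u2 - s) \<noteq> 0"
   and card3: "card {u\<in>Z \<union> S. p u = s} \<ge> 3"
   and deg: "\<forall>x\<in>S. fqst_degree Z S p x \<ge> 3"
  shows "\<exists>S' p' f'. fqst Z zBS S' p' f' \<and> (\<forall>x\<in>S'. fqst_degree Z S' p' x \<ge> 3)
          \<and> fqst_cost Z S' p' f' < fqst_cost Z S p f"
proof -
  have finS: "finite S" and disj: "S \<inter> insert zBS Z = {}"
    and pin: "\<forall>v\<in>Z\<union>S. p v \<in> Z \<union> S \<union> {zBS} \<and> f v > 0"
    and reach: "\<forall>v\<in>Z \<union> S \<union> {zBS}. \<exists>k. (p^^k) v = zBS"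
    and fz: "\<forall>z\<in>Z. f z - (\<Sum>u\<in>{u\<in>Z \<union> S. p u = z}. f u) = 1"
    and fs: "\<forall>x\<in>S. f x = (\<Sum>u\<in>{u\<in>Z \<union> S. p u = x}. f u)"
    and fsink: "(\<Sum>u\<in>{u\<in>Z \<union> S. p u = zBS}. f u) = real (card Z)"
    using fq unfolding fqst_def by blast+
  define g where "g = f u1 *\<^sub>R (u1 - s) + f u2 *\<^sub>R (u2 - s)"
  define w where "w = f u1 + f u2"
  have f1: "f u1 > 0" and f2: "f u2 > 0" using pin u1 u2 by auto
  have w0: "w > 0" using f1 f2 w_def by simp
  define V where "V = Z \<union> S \<union> {zBS}"
  have finV: "finite V" using finS finZ V_def by simp
  define q where "q = (\<lambda>t::real. s + (t / w) *\<^sub>R g)"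
  have inj: "inj_on q {0<..<1}"
  proof
    fix x y assume "x \<in> {0<..<(1::real)}" "y \<in> {0<..<(1::real)}" "q x = q y"
    then have "(x / w) *\<^sub>R g = (y / w) *\<^sub>R g" using q_def by simp
    then have "x / w = y / w" using g0 g_def by (simp add: scaleR_cancel_right)
    then show "x = y" using w0 by simp
  qed
  have "infinite (q ` {0<..<1})"
  proof
    assume "finite (q ` {0<..<1})"
    then have "finite {0<..<(1::real)}" using finite_imageD[OF _ inj] by blast
    then show False using infinite_Ioo[of "0::real" 1] by simp
  qed
  then have "\<not> q ` {0<..<1} \<subseteq> V" using finV finite_subset by blast
  then obtain t0 where "t0 \<in> {0<..<(1::real)}" "q t0 \<notin> V" by blast
  then obtain t where t: "0 < t" "t < 1" "q t \<notin> V" by auto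
  define s' where "s' = q t"
  define p' where "p' = p(u1 := s', u2 := s', s' := s)"
  define f' where "f' = f(s' := w)"
  define S' where "S' = insert s' S"
  have s'V: "s' \<notin> V" using t s'_def by simp
  have ss': "s \<noteq> s'" using s'V sS V_def by auto
  have u1s': "u1 \<noteq> s'" "u2 \<noteq> s'" using s'V u1 u2 V_def by auto
  have p'u1: "p' u1 = s'" "p' u2 = s'" "p' s' = s" using p'_def u1s' by auto
  have p'o: "\<And>v. v \<noteq> u1 \<Longrightarrow> v \<noteq> u2 \<Longrightarrow> v \<noteq> s' \<Longrightarrow> p' v = p v" using p'_def by auto
  have f'o: "\<And>v. v \<noteq> s' \<Longrightarrow> f' v = f v" using f'_def by auto
  have ZS': "Z \<union> S' = insert s' (Z \<union> S)" using S'_def by auto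
  have s'nZS: "s' \<notin> Z \<union> S" using s'V V_def by auto
  define C where "C = {u\<in>Z \<union> S. p u = s}"
  have finC: "finite C" using C_def finS finZ by simp
  have u12C: "u1 \<in> C" "u2 \<in> C" using C_def u1 u2 p1 p2 by auto
  have Co: "{u\<in>Z \<union> S'. p' u = x} = {u\<in>Z \<union> S. p u = x}" if xs: "x \<noteq> s" "x \<noteq> s'" for x
  proof -
    have "(u \<in> Z \<union> S' \<and> p' u = x) = (u \<in> Z \<union> S \<and> p u = x)" for u
    proof (cases "u = u1 \<or> u = u2 \<or> u = s'")
      case True thus ?thesis using p'u1 p1 p2 xs s'nZS ZS' by auto
    next
      case False thus ?thesis using p'o ZS' by auto
    qed
    then show ?thesis by blast
  qed
  have Cs: "{u\<in>Z \<union> S'. p' u = s} = insert s' (C - {u1, u2})"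
  proof -
    have "(u \<in> Z \<union> S' \<and> p' u = s) = (u \<in> insert s' (C - {u1, u2}))" for u
    proof (cases "u = u1 \<or> u = u2 \<or> u = s'")
      case True thus ?thesis using p'u1 ss' u1s' ZS' by auto
    next
      case False thus ?thesis using p'o ZS' C_def by auto
    qed
    then show ?thesis by blast
  qed
  have Cs': "{u\<in>Z \<union> S'. p' u = s'} = {u1, u2}"
  proof -
    have "(u \<in> Z \<union> S' \<and> p' u = s') = (u \<in> {u1, u2})" for u
    proof (cases "u = u1 \<or> u = u2 \<or> u = s'")
      case True thus ?thesis using p'u1 ss' u1s' ZS' u1 u2 by auto
    next
      case False
      then have "u \<in> Z \<union> S \<Longrightarrow> p u \<in> V" using pin V_def by auto
      thus ?thesis using False p'o ZS' s'V by auto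
    qed
    then show ?thesis by blast
  qed
  have sumf': "sum f' A = sum f A" if "A \<subseteq> Z \<union> S" for A
  proof (rule sum.cong)
    fix x assume "x \<in> A"
    then have "x \<noteq> s'" using that s'nZS by blast
    then show "f' x = f x" using f'o by blast
  qed simp
  have fqn: "fqst Z zBS S' p' f'"
    unfolding fqst_def
  proof (intro conjI ballI)
    show "finite S'" using S'_def finS by simp
    show "S' \<inter> insert zBS Z = {}" using S'_def disj s'V V_def by auto
  next
    fix v assume v: "v \<in> Z \<union> S'"
    show "p' v \<in> Z \<union> S' \<union> {zBS}"
    proof (cases "v = u1 \<or> v = u2 \<or> v = s'")
      case True thus ?thesis using p'u1 S'_def sS by auto
    next
      case False thus ?thesis using p'o v ZS' pin S'_def by auto
    qed
    show "f' v > 0"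
    proof (cases "v = s'")
      case True thus ?thesis using f'_def w0 by simp
    next
      case False thus ?thesis using f'o v ZS' pin by auto
    qed
  next
    fix v assume v: "v \<in> Z \<union> S' \<union> {zBS}"
    have pin': "\<forall>v\<in>Z\<union>S. p v \<in> Z\<union>S\<union>{zBS}" using pin by blast
    have s'n: "s' \<notin> Z\<union>S\<union>{zBS}" using s'V V_def by simp
    show "\<exists>k. (p' ^^ k) v = zBS"
    proof (cases "v = s'")
      case True
      obtain k where "(p^^k) s = zBS" using reach sS by blast
      then obtain m where m: "(p'^^m) s = zBS"
        using reach_lift[OF pin' _ _ s'n p1 p2 p'_def] sS by blast
      have "(p'^^(Suc m)) v = (p'^^m) (p' v)" by (simp only: funpow_Suc_right comp_def)
      then show ?thesis using m True p'u1 by metis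
    next
      case False
      then have v2: "v \<in> Z \<union> S \<union> {zBS}" using v ZS' by auto
      obtain k where "(p^^k) v = zBS" using reach v2 by blast
      then show ?thesis using reach_lift[OF pin' _ v2 s'n p1 p2 p'_def] by blast
    qed
  next
    fix z assume z: "z \<in> Z"
    have zs: "z \<noteq> s" "z \<noteq> s'" using z disj sS s'V V_def by auto
    have "{u\<in>Z \<union> S. p u = z} \<subseteq> Z \<union> S" by auto
    then show "f' z - (\<Sum>u\<in>{u\<in>Z \<union> S'. p' u = z}. f' u) = 1"
      using Co[OF zs] sumf' f'o[OF zs(2)] fz z by simp
  next
    fix x assume x: "x \<in> S'"
    show "f' x = (\<Sum>u\<in>{u\<in>Z \<union> S'. p' u = x}. f' u)"
    proof (cases "x = s'")
      case True
      then show ?thesis using Cs' f'_def w_def u12 u1s' by simp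
    next
      case xs': False
      show ?thesis
      proof (cases "x = s")
        case True
        have sub: "{u1, u2} \<subseteq> C" using u12C by auto
        have "(\<Sum>u\<in>insert s' (C - {u1, u2}). f' u) = f' s' + sum f' (C - {u1, u2})"
          using finC C_def s'nZS by (subst sum.insert) auto
        also have "sum f' (C - {u1, u2}) = sum f (C - {u1, u2})"
          by (rule sumf') (auto simp: C_def)
        also have "\<dots> = sum f C - sum f {u1, u2}" using sum_diff[OF finC sub] by simp
        also have "sum f {u1, u2} = f u1 + f u2" using u12 by simp
        finally have "(\<Sum>u\<in>insert s' (C - {u1, u2}). f' u) = sum f C"
          using f'_def w_def by simp
        then show ?thesis using True Cs fs sS C_def f'o[OF xs'] by simp
      next
        case False
        have xS: "x \<in> S" using x xs' S'_def by auto
        have "{u\<in>Z \<union> S. p u = x} \<subseteq> Z \<union> S" by auto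
        then show ?thesis using Co[OF False xs'] sumf' f'o[OF xs'] fs xS by simp
      qed
    qed
  next
    have zs: "zBS \<noteq> s" "zBS \<noteq> s'" using disj sS s'V V_def by auto
    have "{u\<in>Z \<union> S. p u = zBS} \<subseteq> Z \<union> S" by auto
    then show "(\<Sum>u\<in>{u\<in>Z \<union> S'. p' u = zBS}. f' u) = real (card Z)"
      using Co[OF zs] sumf' fsink by simp
  qed
  have degn: "\<forall>x\<in>S'. fqst_degree Z S' p' x \<ge> 3"
  proof
    fix x assume x: "x \<in> S'"
    show "fqst_degree Z S' p' x \<ge> 3"
    proof (cases "x = s'")
      case True
      then show ?thesis using Cs' u12 by (simp add: fqst_degree_def)
    next
      case xs': False
      show ?thesis
      proof (cases "x = s")
        case True
        have sub: "{u1, u2} \<subseteq> C" using u12C by auto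
        have "card (C - {u1, u2}) = card C - 2" using card_Diff_subset[OF _ sub] u12 by simp
        moreover have "card (insert s' (C - {u1, u2})) = card (C - {u1, u2}) + 1"
          using finC C_def s'nZS by (subst card_insert_disjoint) auto
        ultimately show ?thesis using True Cs card3 C_def by (simp add: fqst_degree_def)
      next
        case False
        have xS: "x \<in> S" using x xs' S'_def by auto
        show ?thesis using Co[OF False xs'] deg xS by (simp add: fqst_degree_def)
      qed
    qed
  qed
  have costn: "fqst_cost Z S' p' f' < fqst_cost Z S p f"
  proof -
    define h where "h v = f v * (dist v (p v))\<^sup>2" for v
    define h' where "h' v = f' v * (dist v (p' v))\<^sup>2" for v
    have finZS: "finite (Z \<union> S)" using finZ finS by simp
    have c1: "fqst_cost Z S' p' f' = h' s' + sum h' (Z \<union> S)"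
      unfolding fqst_cost_def h'_def using ZS' s'nZS finZS by simp
    have c2: "fqst_cost Z S p f = sum h (Z \<union> S)" unfolding fqst_cost_def h_def by simp
    have "sum h' (Z \<union> S) - sum h (Z \<union> S) = (\<Sum>v\<in>Z \<union> S. h' v - h v)"
      by (simp add: sum_subtractf)
    also have "\<dots> = (\<Sum>v\<in>{u1, u2}. h' v - h v)"
    proof (rule sum.mono_neutral_right[OF finZS])
      show "{u1, u2} \<subseteq> Z \<union> S" using u1 u2 by auto
      show "\<forall>i\<in>Z \<union> S - {u1, u2}. h' i - h i = 0"
      proof
        fix i assume i: "i \<in> Z \<union> S - {u1, u2}"
        then have "i \<noteq> s'" using s'nZS by auto
        then show "h' i - h i = 0" using i p'o f'o h_def h'_def by auto
      qed
    qed
    also have "\<dots> = (h' u1 - h u1) + (h' u2 - h u2)" using u12 by simp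
    finally have diff: "sum h' (Z \<union> S) - sum h (Z \<union> S) = (h' u1 - h u1) + (h' u2 - h u2)" .
    define d where "d = (t / w) *\<^sub>R g"
    have s'd: "s' = s + d" using s'_def q_def d_def by simp
    define G where "G = g \<bullet> g"
    have G0: "G > 0" using g0 g_def G_def by simp
    have gd: "g \<bullet> d = (t / w) * G" using d_def G_def by simp
    have dd: "d \<bullet> d = (t / w) * (t / w) * G" using d_def G_def by simp
    have gsplit: "f u1 * ((u1 - s) \<bullet> d) + f u2 * ((u2 - s) \<bullet> d) = g \<bullet> d"
      using g_def by (simp add: inner_add_left)
    have e: "(dist u s')\<^sup>2 = (dist u s)\<^sup>2 - 2 * ((u - s) \<bullet> d) + d \<bullet> d" for u
    proof -
      have uu: "u - s' = (u - s) - d" using s'd by simp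
      have "(dist u s')\<^sup>2 = (u - s') \<bullet> (u - s')"
        by (simp add: dist_norm power2_norm_eq_inner)
      also have "\<dots> = ((u - s) - d) \<bullet> ((u - s) - d)" by (simp only: uu)
      also have "\<dots> = (u - s) \<bullet> (u - s) - 2 * ((u - s) \<bullet> d) + d \<bullet> d"
        by (simp add: inner_diff_left inner_diff_right inner_commute)
      finally show ?thesis by (simp add: dist_norm power2_norm_eq_inner)
    qed
    have e3: "(dist s' s)\<^sup>2 = d \<bullet> d" using s'd by (simp add: dist_norm power2_norm_eq_inner)
    have "(dist u1 s')\<^sup>2 - (dist u1 s)\<^sup>2 = - 2 * ((u1 - s) \<bullet> d) + d \<bullet> d"
      using e[of u1] by linarith
    moreover have "h' u1 - h u1 = f u1 * ((dist u1 s')\<^sup>2 - (dist u1 s)\<^sup>2)"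
      using h_def h'_def p'u1 p1 f'o u1s' by (simp add: right_diff_distrib)
    ultimately have hu1: "h' u1 - h u1 = f u1 * (- 2 * ((u1 - s) \<bullet> d) + d \<bullet> d)" by simp
    have "(dist u2 s')\<^sup>2 - (dist u2 s)\<^sup>2 = - 2 * ((u2 - s) \<bullet> d) + d \<bullet> d"
      using e[of u2] by linarith
    moreover have "h' u2 - h u2 = f u2 * ((dist u2 s')\<^sup>2 - (dist u2 s)\<^sup>2)"
      using h_def h'_def p'u1 p2 f'o u1s' by (simp add: right_diff_distrib)
    ultimately have hu2: "h' u2 - h u2 = f u2 * (- 2 * ((u2 - s) \<bullet> d) + d \<bullet> d)" by simp
    have hs': "h' s' = w * (d \<bullet> d)" using h'_def p'u1 f'_def e3 by simp
    have tot: "h' s' + (h' u1 - h u1) + (h' u2 - h u2) = 2 * w * (d \<bullet> d) - 2 * (g \<bullet> d)"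
      using hu1 hu2 hs' gsplit w_def by (simp add: algebra_simps)
    also have "\<dots> = 2 * (t / w) * G * (t - 1)" using gd dd w0 by (simp add: field_simps)
    also have "\<dots> < 0"
    proof -
      have "2 * (t / w) * G > 0" using t G0 w0 by simp
      moreover have "t - 1 < 0" using t by simp
      ultimately show ?thesis using mult_pos_neg by blast
    qed
    finally show ?thesis using c1 c2 diff by linarith
  qed
  show ?thesis using fqn degn costn by blast
qed


theorem mainTheorem8:
  fixes Z :: "pt set" and zBS :: pt and S :: "pt set"
    and p :: "pt \<Rightarrow> pt" and f :: "pt \<Rightarrow> real"
  assumes "finite Z" and "Z \<noteq> {}" and "zBS \<notin> Z"
    and "mfqst 3 Z zBS S p f"
  shows "\<forall>s\<in>S. fqst_degree Z S p s = 3"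
proof
  fix s assume sS: "s \<in> S"
  have fq: "fqst Z zBS S p f" and deg: "\<forall>x\<in>S. fqst_degree Z S p x \<ge> 3"
    and mini: "\<And>S' p' f'. fqst Z zBS S' p' f' \<Longrightarrow> (\<forall>x\<in>S'. fqst_degree Z S' p' x \<ge> 3)
        \<Longrightarrow> fqst_cost Z S p f \<le> fqst_cost Z S' p' f'"
    using assms(4) unfolding mfqst_def by blast+
  have finS: "finite S" and disj: "S \<inter> insert zBS Z = {}"
    and pin: "\<forall>v\<in>Z\<union>S. p v \<in> Z \<union> S \<union> {zBS} \<and> f v > 0"
    and reach: "\<forall>v\<in>Z \<union> S \<union> {zBS}. \<exists>k. (p^^k) v = zBS"
    using fq unfolding fqst_def by blast+
  define C where "C = {u\<in>Z \<union> S. p u = s}"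
  have finC: "finite C" using C_def finS assms(1) by simp
  have ge: "card C \<ge> 2" using deg sS C_def by (auto simp: fqst_degree_def)
  have nots: "u \<noteq> s" if "u \<in> C" for u
  proof
    assume us: "u = s"
    then have ps: "p s = s" using that C_def by simp
    have it: "(p^^k) s = s" for k by (induction k) (simp_all add: ps)
    obtain k where "(p^^k) s = zBS" using reach sS by blast
    then show False using it disj sS by auto
  qed
  show "fqst_degree Z S p s = 3"
  proof (rule ccontr)
    assume "fqst_degree Z S p s \<noteq> 3"
    then have c3: "card C \<ge> 3" using ge C_def by (auto simp: fqst_degree_def)
    have "C \<noteq> {}" using c3 by (metis card.empty not_numeral_le_zero)
    then obtain u1 where u1: "u1 \<in> C" by blast
    have "card (C - {u1}) \<ge> 2" using c3 u1 finC by simp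
    then have "C - {u1} \<noteq> {}" by (metis card.empty not_numeral_le_zero)
    then obtain u2 where u2: "u2 \<in> C - {u1}" by blast
    have "card (C - {u1} - {u2}) \<ge> 1" using c3 u1 u2 finC
      by (simp add: card_Diff_singleton_if)
    then have "C - {u1} - {u2} \<noteq> {}" by (metis card.empty not_one_le_zero)
    then obtain u3 where u3: "u3 \<in> C - {u1} - {u2}" by blast
    have pos: "f u > 0" and uZS: "u \<in> Z \<union> S" and pu: "p u = s" if "u \<in> C" for u
      using that pin C_def by auto
    have app: "False" if a: "x \<in> C" "y \<in> C" "x \<noteq> y"
      and g: "f x *\<^sub>R (x - s) + f y *\<^sub>R (y - s) \<noteq> 0" for x y
    proof -
      obtain S' p' f' where "fqst Z zBS S' p' f'" "\<forall>x\<in>S'. fqst_degree Z S' p' x \<ge> 3"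
          "fqst_cost Z S' p' f' < fqst_cost Z S p f"
        using split_step[OF fq assms(1) sS uZS[OF a(1)] uZS[OF a(2)] a(3) pu[OF a(1)] pu[OF a(2)] g]
          c3 deg C_def by blast
      then show False using mini by fastforce
    qed
    define A where "A = f u1 *\<^sub>R (u1 - s)"
    define B where "B = f u2 *\<^sub>R (u2 - s)"
    define D where "D = f u3 *\<^sub>R (u3 - s)"
    have "A + B = 0" using app[of u1 u2] u1 u2 A_def B_def by auto
    moreover have "A + D = 0" using app[of u1 u3] u1 u3 A_def D_def by auto
    moreover have "B + D = 0" using app[of u2 u3] u2 u3 B_def D_def by auto
    ultimately have "D = 0"
      by (metis add.commute add_right_cancel add_right_imp_eq add_diff_cancel_left' diff_self
          neg_eq_iff_add_eq_0 minus_add_distrib add_uminus_conv_diff scaleR_2 scaleR_eq_0_iff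
          zero_neq_numeral)
    then have "u3 - s = 0" using pos[of u3] u3 D_def by simp
    then show False using nots[of u3] u3 by simp
  qed
qed

end
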